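(* Let the fading gains be i.i.d. with density $f(\gamma)=\frac{m^m\gamma^{m-1}}{\Gamma(m)}e^{-m\gamma}$ ($m>0$), let $\beta>0$ with $I_{\mathcal X}(\beta)\ge R>0$, and consider the long-term truncated water-filling scheme $\mathbf p^{\rm tw}_{\rm lt}$ with threshold $s$ and long-term power $P(s)$. If \[ d_\beta(R)=1+\Big\lfloor B\Big(1-\frac R{I_{\mathcal X}(\beta)}\Big)\Big\rfloor>\frac1m, \] then $\lim_{s\to\infty}P(s)<\infty$ while the outage probability tends to $0$; i.e. the corresponding delay-limited capacity is non-zero.
   Context: $(x)_+=\max\{x,0\}$. $I_{\mathcal X}(\rho)$ is the mutual information (bits) of the AWGN channel with SNR $\rho$ and uniform input on a discrete constellation $\mathcal X$. Long-term truncated water-filling: $\wp^{\rm tw}_b(\boldsymbol\gamma)=\min\{\beta/\gamma_b,(\eta-1/\gamma_b)_+\}$ with $\eta$ such that $\frac1B\sum_bI_{\mathcal X}(\wp^{\rm tw}_b\gamma_b)=R$; $\mathbf p^{\rm tw}_{\rm lt}(\boldsymbol\gamma)=\boldsymbol\wp^{\rm tw}(\boldsymbol\gamma)$ if $\frac1B\sum_b\wp^{\rm tw}_b(\boldsymbol\gamma)\le s$ and $\mathbf 0$ otherwise; $P(s)$ is its average power $\mathbb E[\frac1B\sum_bp^{\rm tw}_{{\rm lt},b}(\boldsymbol\gamma)]$. Outage occurs when $\frac1B\sum_bI_{\mathcal X}(p_b\gamma_b)<R$. *)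

theory Defs
  imports "HOL-Probability.Probability"
begin

(* Mutual information (bits) of the complex AWGN channel Y = sqrt(rho) X + Z,
   Z ~ CN(0,1) (density exp(-|z|^2)/pi on C), with X uniform on the finite
   constellation CX. *)
definition mi_awgn :: "complex set \<Rightarrow> real \<Rightarrow> real" where
  "mi_awgn CX \<rho> =
     log 2 (real (card CX))
     - (1 / real (card CX)) * (\<Sum>x\<in>CX.
          integral\<^sup>L lborel (\<lambda>z::complex.
             (1 / pi) * exp (- (cmod z)\<^sup>2) *
             log 2 (\<Sum>x'\<in>CX. exp (- (cmod (complex_of_real (sqrt \<rho>) * (x - x') + z))\<^sup>2
                                      + (cmod z)\<^sup>2))))"

definition wf_level :: "real \<Rightarrow> real \<Rightarrow> real \<Rightarrow> real" where
  "wf_level \<beta> \<eta> g = min (\<beta> / g) (max (\<eta> - 1 / g) 0)"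

definition wf_eta :: "complex set \<Rightarrow> nat \<Rightarrow> real \<Rightarrow> real \<Rightarrow> (nat \<Rightarrow> real) \<Rightarrow> real" where
  "wf_eta CX B R \<beta> \<gamma> = (SOME \<eta>.
      (1 / real B) * (\<Sum>b<B. mi_awgn CX (wf_level \<beta> \<eta> (\<gamma> b) * \<gamma> b)) = R)"

definition wp_tw :: "complex set \<Rightarrow> nat \<Rightarrow> real \<Rightarrow> real \<Rightarrow> (nat \<Rightarrow> real) \<Rightarrow> nat \<Rightarrow> real" where
  "wp_tw CX B R \<beta> \<gamma> b = wf_level \<beta> (wf_eta CX B R \<beta> \<gamma>) (\<gamma> b)"

definition p_tw_lt :: "complex set \<Rightarrow> nat \<Rightarrow> real \<Rightarrow> real \<Rightarrow> real \<Rightarrow> (nat \<Rightarrow> real) \<Rightarrow> nat \<Rightarrow> real" where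
  "p_tw_lt CX B R \<beta> s \<gamma> b =
     (if (1 / real B) * (\<Sum>b'<B. wp_tw CX B R \<beta> \<gamma> b') \<le> s then wp_tw CX B R \<beta> \<gamma> b else 0)"

definition nakagami_gain :: "real \<Rightarrow> real measure" where
  "nakagami_gain m = density lborel (\<lambda>g. ennreal
      (if g > 0 then m powr m * g powr (m - 1) / Gamma m * exp (- m * g) else 0))"

definition fading :: "real \<Rightarrow> nat \<Rightarrow> (nat \<Rightarrow> real) measure" where
  "fading m B = PiM {..<B} (\<lambda>_. nakagami_gain m)"

definition avg_power :: "complex set \<Rightarrow> real \<Rightarrow> nat \<Rightarrow> real \<Rightarrow> real \<Rightarrow> real \<Rightarrow> ennreal" where
  "avg_power CX m B R \<beta> s = (\<integral>\<^sup>+ \<gamma>. ennreal ((1 / real B) * (\<Sum>b<B. p_tw_lt CX B R \<beta> s \<gamma> b)) \<partial>fading m B)"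

definition outage_prob :: "complex set \<Rightarrow> real \<Rightarrow> nat \<Rightarrow> real \<Rightarrow> real \<Rightarrow> real \<Rightarrow> real" where
  "outage_prob CX m B R \<beta> s = measure (fading m B)
     {\<gamma> \<in> space (fading m B).
        (1 / real B) * (\<Sum>b<B. mi_awgn CX (p_tw_lt CX B R \<beta> s \<gamma> b * \<gamma> b)) < R}"

end

theory Submission
  imports Defs
begin

definition cnd :: "real \<Rightarrow> complex \<Rightarrow> real" where
  "cnd \<sigma> z = normal_density 0 \<sigma> (Re z) * normal_density 0 \<sigma> (Im z)"

lemma cnd_nn: assumes "\<sigma> > 0" shows "(\<integral>\<^sup>+z. ennreal (cnd \<sigma> z) \<partial>lborel) = 1"
proof -
  have "(\<integral>\<^sup>+z. ennreal (cnd \<sigma> z) \<partial>lborel) =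
     (\<integral>\<^sup>+z. (\<Prod>b\<in>Basis. (\<lambda>b t. ennreal (normal_density 0 \<sigma> t)) b ((z::complex) \<bullet> b)) \<partial>lborel)"
  proof -
    have "\<And>z. ennreal (cnd \<sigma> z) = (\<Prod>b\<in>(Basis::complex set). ennreal (normal_density 0 \<sigma> (z \<bullet> b)))"
      by (simp add: cnd_def Basis_complex_def inner_complex_def ennreal_mult)
    then show ?thesis by simp
  qed
  also have "\<dots> = (\<Prod>b\<in>(Basis::complex set). (\<integral>\<^sup>+t. ennreal (normal_density 0 \<sigma> t) \<partial>lborel))"
    by (rule nn_integral_lborel_prod) auto
  also have "(\<integral>\<^sup>+t. ennreal (normal_density 0 \<sigma> t) \<partial>lborel) = 1"
    using assms by (subst nn_integral_eq_integral) auto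
  finally show ?thesis by simp
qed

lemma cnd_measurable[measurable]: "cnd \<sigma> \<in> borel_measurable borel"
  unfolding cnd_def[abs_def] by measurable

lemma cnd_nonneg: "0 \<le> cnd \<sigma> z" by (simp add: cnd_def)

lemma cnd_integrable: "\<sigma> > 0 \<Longrightarrow> integrable lborel (cnd \<sigma>)"
  by (rule integrableI_nonneg) (auto simp: cnd_nonneg cnd_nn)

lemma cnd_integral: "\<sigma> > 0 \<Longrightarrow> integral\<^sup>L lborel (cnd \<sigma>) = 1"
  using cnd_nn[of \<sigma>] cnd_nonneg by (subst integral_eq_nn_integral) auto

lemma cnd_eq: "\<sigma> > 0 \<Longrightarrow> cnd \<sigma> z = exp (- (cmod z)\<^sup>2 / (2 * \<sigma>\<^sup>2)) / (2 * pi * \<sigma>\<^sup>2)"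
  unfolding cnd_def normal_density_def cmod_power2
  by (simp add: exp_add[symmetric] real_sqrt_mult field_simps power2_eq_square)

lemma transl_integrable:
  fixes f :: "complex \<Rightarrow> real"
  assumes "integrable lborel f"
  shows "integrable lborel (\<lambda>z. f (w + z))"
proof -
  have "integrable (distr lborel borel ((+) w)) f" using assms by (simp add: lborel_distr_plus)
  moreover have "f \<in> borel_measurable borel"
    using borel_measurable_integrable[OF assms] by (simp add: measurable_cong_sets[OF sets_lborel refl])
  ultimately show ?thesis by (subst (asm) integrable_distr_eq) auto
qed

lemma transl_integral:
  fixes f :: "complex \<Rightarrow> real"
  assumes "f \<in> borel_measurable borel"
  shows "(\<integral>z. f (w + z) \<partial>lborel) = integral\<^sup>L lborel f"
proof -
  have "(\<integral>z. f (w + z) \<partial>lborel) = integral\<^sup>L (distr lborel borel ((+) w)) f"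
    using assms by (subst integral_distr) auto
  then show ?thesis by (simp add: lborel_distr_plus)
qed


definition phi :: "complex \<Rightarrow> real" where
  "phi z = (1 / pi) * exp (- (cmod z)\<^sup>2)"

definition Tf :: "complex set \<Rightarrow> real \<Rightarrow> complex \<Rightarrow> complex \<Rightarrow> real" where
  "Tf CX \<rho> x z = (\<Sum>x'\<in>CX. exp (- (cmod (complex_of_real (sqrt \<rho>) * (x - x') + z))\<^sup>2 + (cmod z)\<^sup>2))"

lemma mi_alt: "mi_awgn CX \<rho> = log 2 (real (card CX))
     - (1 / real (card CX)) * (\<Sum>x\<in>CX. \<integral>z. phi z * log 2 (Tf CX \<rho> x z) \<partial>lborel)"
  unfolding mi_awgn_def phi_def Tf_def by simp

lemma phi_cnd: "phi = cnd (sqrt (1/2))"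
proof
  fix z show "phi z = cnd (sqrt (1/2)) z"
    by (subst cnd_eq) (auto simp: phi_def)
qed

lemma phi_measurable[measurable]: "phi \<in> borel_measurable borel"
  unfolding phi_def[abs_def] by measurable

lemma Tf_measurable[measurable]: "Tf CX \<rho> x \<in> borel_measurable borel"
  unfolding Tf_def[abs_def] by measurable

lemma phi_integrable: "integrable lborel phi"
  unfolding phi_cnd by (rule cnd_integrable) auto

lemma phi_integral: "integral\<^sup>L lborel phi = 1"
  unfolding phi_cnd by (rule cnd_integral) auto

lemma phi_nonneg: "0 \<le> phi z" by (simp add: phi_def)
lemma phi_pos: "0 < phi z" by (simp add: phi_def)

lemma phi_T: "phi z * Tf CX \<rho> x z = (\<Sum>x'\<in>CX. phi (complex_of_real (sqrt \<rho>) * (x - x') + z))"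
  unfolding Tf_def phi_def sum_distrib_left
  by (intro sum.cong refl) (simp add: exp_add[symmetric])

lemma T_ge1: assumes "finite CX" "x \<in> CX" shows "1 \<le> Tf CX \<rho> x z"
proof -
  have "(\<lambda>x'. exp (- (cmod (complex_of_real (sqrt \<rho>) * (x - x') + z))\<^sup>2 + (cmod z)\<^sup>2)) x \<le> Tf CX \<rho> x z"
    unfolding Tf_def by (rule member_le_sum) (use assms in auto)
  then show ?thesis by simp
qed

lemma ig_nonneg: assumes "finite CX" "x \<in> CX" shows "0 \<le> phi z * log 2 (Tf CX \<rho> x z)"
  using T_ge1[OF assms, of \<rho> z] phi_nonneg[of z] by simp

lemma ig_le: assumes "finite CX" "x \<in> CX"
  shows "phi z * log 2 (Tf CX \<rho> x z) \<le> (\<Sum>x'\<in>CX. phi (complex_of_real (sqrt \<rho>) * (x - x') + z)) / ln 2"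
proof -
  have T1: "1 \<le> Tf CX \<rho> x z" by (rule T_ge1[OF assms])
  have "log 2 (Tf CX \<rho> x z) = ln (Tf CX \<rho> x z) / ln 2" by (simp add: log_def)
  also have "\<dots> \<le> Tf CX \<rho> x z / ln 2"
    using ln_le_minus_one[of "Tf CX \<rho> x z"] T1 by (intro divide_right_mono) auto
  finally have "phi z * log 2 (Tf CX \<rho> x z) \<le> phi z * (Tf CX \<rho> x z / ln 2)"
    by (intro mult_left_mono phi_nonneg)
  then show ?thesis by (simp add: phi_T[symmetric])
qed

lemma phi_shift_integrable: "integrable lborel (\<lambda>z. phi (w + z))"
  by (rule transl_integrable[OF phi_integrable])

lemma phi_shift_integral: "(\<integral>z. phi (w + z) \<partial>lborel) = 1"
  by (subst transl_integral) (auto simp: phi_integral)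

lemma ig_integrable: assumes "finite CX" "x \<in> CX"
  shows "integrable lborel (\<lambda>z. phi z * log 2 (Tf CX \<rho> x z))"
proof (rule Bochner_Integration.integrable_bound)
  show "integrable lborel (\<lambda>z. (\<Sum>x'\<in>CX. phi (complex_of_real (sqrt \<rho>) * (x - x') + z)) / ln 2)"
  proof -
    have "integrable lborel (\<lambda>z. (\<Sum>x'\<in>CX. phi (complex_of_real (sqrt \<rho>) * (x - x') + z)))"
      by (rule Bochner_Integration.integrable_sum) (rule phi_shift_integrable)
    then show ?thesis by simp
  qed
  show "(\<lambda>z. phi z * log 2 (Tf CX \<rho> x z)) \<in> borel_measurable lborel" by measurable
  show "AE z in lborel. norm (phi z * log 2 (Tf CX \<rho> x z))
      \<le> norm ((\<Sum>x'\<in>CX. phi (complex_of_real (sqrt \<rho>) * (x - x') + z)) / ln 2)"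
  proof (intro AE_I2)
    fix z
    have "0 \<le> phi z * log 2 (Tf CX \<rho> x z)" by (rule ig_nonneg[OF assms])
    moreover have "phi z * log 2 (Tf CX \<rho> x z) \<le> (\<Sum>x'\<in>CX. phi (complex_of_real (sqrt \<rho>) * (x - x') + z)) / ln 2"
      by (rule ig_le[OF assms])
    ultimately show "norm (phi z * log 2 (Tf CX \<rho> x z))
      \<le> norm ((\<Sum>x'\<in>CX. phi (complex_of_real (sqrt \<rho>) * (x - x') + z)) / ln 2)"
      using sum_nonneg[of CX "\<lambda>x'. phi (complex_of_real (sqrt \<rho>) * (x - x') + z)"] phi_nonneg by simp
  qed
qed

lemma mi_zero: assumes "finite CX" "CX \<noteq> {}" shows "mi_awgn CX 0 = 0"
proof -
  have T: "Tf CX 0 x z = real (card CX)" for x z by (simp add: Tf_def)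
  have "(\<integral>z. phi z * log 2 (Tf CX 0 x z) \<partial>lborel) = log 2 (real (card CX))" for x
    by (simp add: T phi_integral)
  then show ?thesis using assms by (simp add: mi_alt)
qed

lemma ln_strict: fixes t :: real assumes "0 < t" "t \<noteq> 1" shows "ln t < t - 1"
proof -
  have s: "sqrt t > 0" using assms by simp
  have "ln t = 2 * ln (sqrt t)" using assms by (simp add: ln_sqrt)
  also have "\<dots> \<le> 2 * (sqrt t - 1)" using ln_le_minus_one[OF s] by simp
  also have "\<dots> < t - 1"
  proof -
    have "sqrt t \<noteq> 1" using assms by simp
    then have "0 < (sqrt t - 1)^2" by simp
    then show ?thesis using assms by (simp add: power2_eq_square algebra_simps)
  qed
  finally show ?thesis .
qed

lemma integral_pos_cont:
  fixes f :: "complex \<Rightarrow> real"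
  assumes cont: "continuous_on UNIV f" and nn: "\<And>z. 0 \<le> f z" and pos: "0 < f 0"
    and int: "integrable lborel f"
  shows "0 < integral\<^sup>L lborel f"
proof -
  have "isCont f 0" using cont by (simp add: continuous_on_eq_continuous_at)
  then have "f \<midarrow>0\<rightarrow> f 0" by (simp add: isCont_def)
  from LIM_D[OF this, of "f 0 / 2"] pos obtain s where s: "s > 0"
    and hs: "\<And>x. x \<noteq> 0 \<and> norm (x - 0) < s \<Longrightarrow> norm (f x - f 0) < f 0 / 2" by auto
  have low: "f 0 / 2 \<le> f z" if "cmod z < s" for z
  proof (cases "z = 0")
    case True then show ?thesis using pos by simp
  next
    case False then have "\<bar>f z - f 0\<bar> < f 0 / 2" using hs[of z] that by auto
    then show ?thesis by linarith
  qed
  define r where "r = s / 2"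
  have r: "r > 0" using s by (simp add: r_def)
  define B where "B = cbox (Complex (-r) (-r)) (Complex r r)"
  have inB: "cmod z < s" if "z \<in> B" for z
  proof -
    have "\<bar>Re z\<bar> \<le> r" "\<bar>Im z\<bar> \<le> r" using that by (auto simp: B_def cbox_complex_eq)
    then have "(Re z)\<^sup>2 \<le> r\<^sup>2" "(Im z)\<^sup>2 \<le> r\<^sup>2"
      by (metis abs_ge_zero power2_abs power_mono)+
    then have "(cmod z)\<^sup>2 \<le> 2 * r\<^sup>2" by (simp add: cmod_power2)
    also have "\<dots> < s\<^sup>2" using s by (simp add: r_def power2_eq_square)
    finally show ?thesis using s by (simp add: power_less_imp_less_base)
  qed
  have mB: "measure lborel B = (2 * r) * (2 * r)"
    using r by (simp add: B_def measure_lborel_cbox_eq Basis_complex_def inner_complex_def)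
  have fin: "emeasure lborel B < \<infinity>" unfolding B_def by (rule emeasure_lborel_cbox_finite)
  have intB: "integrable lborel (\<lambda>z. f 0 / 2 * indicator B z)"
    using fin by (intro integrable_mult_right integrable_real_indicator) (auto simp: B_def)
  have "f 0 / 2 * ((2 * r) * (2 * r)) = (\<integral>z. f 0 / 2 * indicator B z \<partial>lborel)"
    using mB by simp
  also have "\<dots> \<le> integral\<^sup>L lborel f"
  proof (rule integral_mono[OF intB int])
    fix z show "f 0 / 2 * indicator B z \<le> f z"
    proof (cases "z \<in> B")
      case True then show ?thesis using low[OF inB[OF True]] by simp
    qed (simp add: nn)
  qed
  finally have le: "f 0 / 2 * ((2 * r) * (2 * r)) \<le> integral\<^sup>L lborel f" .
  moreover have "0 < f 0 / 2 * ((2 * r) * (2 * r))" using pos r by simp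
  ultimately show ?thesis by linarith
qed

lemma Tf_pos: "finite CX \<Longrightarrow> x \<in> CX \<Longrightarrow> 0 < Tf CX \<rho> x z"
  using T_ge1[of CX x \<rho> z] by simp

lemma Tf_cont: "continuous_on UNIV (Tf CX \<rho> x)"
  unfolding Tf_def[abs_def] by (intro continuous_intros)

lemma Tf_zero_less:
  assumes fin: "finite CX" and x: "x \<in> CX" and c2: "2 \<le> card CX" and rho: "\<rho> > 0"
  shows "Tf CX \<rho> x 0 < real (card CX)"
proof -
  obtain y where y: "y \<in> CX" "y \<noteq> x"
  proof -
    have "\<not> CX \<subseteq> {x}"
    proof
      assume "CX \<subseteq> {x}" then have "card CX \<le> card {x}" by (intro card_mono) auto
      then show False using c2 by simp
    qed
    then show ?thesis using that by auto
  qed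
  have "Tf CX \<rho> x 0 = (\<Sum>x'\<in>CX. exp (- (cmod (complex_of_real (sqrt \<rho>) * (x - x')))\<^sup>2))"
    by (simp add: Tf_def)
  also have "\<dots> < (\<Sum>x'\<in>CX. 1)"
  proof (rule sum_strict_mono_ex1[OF fin])
    show "\<forall>x'\<in>CX. exp (- (cmod (complex_of_real (sqrt \<rho>) * (x - x')))\<^sup>2) \<le> 1" by simp
    have "0 < cmod (complex_of_real (sqrt \<rho>) * (x - y))" using y rho by (simp add: norm_mult)
    then have "0 < (cmod (complex_of_real (sqrt \<rho>) * (x - y)))\<^sup>2" by simp
    then show "\<exists>a\<in>CX. exp (- (cmod (complex_of_real (sqrt \<rho>) * (x - a)))\<^sup>2) < 1"
      using y by (intro bexI[of _ y]) auto
  qed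
  finally show ?thesis by simp
qed

lemma ig_less:
  assumes fin: "finite CX" and x: "x \<in> CX" and c2: "2 \<le> card CX" and rho: "\<rho> > 0"
  shows "(\<integral>z. phi z * log 2 (Tf CX \<rho> x z) \<partial>lborel) < log 2 (real (card CX))"
proof -
  define M where "M = real (card CX)"
  have M: "M > 0" using c2 by (simp add: M_def)
  define T where "T = Tf CX \<rho> x"
  have Tp: "\<And>z. 0 < T z" using Tf_pos[OF fin x] by (simp add: T_def)
  define h where "h z = phi z * (T z / M - 1 - ln (T z / M))" for z
  have h_eq: "h z = phi z * T z / M - phi z - ln 2 * (phi z * log 2 (T z)) + ln M * phi z" for z
    using Tp[of z] M by (simp add: h_def ln_div log_def algebra_simps)
  have int_ig: "integrable lborel (\<lambda>z. phi z * log 2 (T z))"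
    unfolding T_def by (rule ig_integrable[OF fin x])
  have int_pT: "integrable lborel (\<lambda>z. phi z * T z)"
    unfolding T_def phi_T by (rule Bochner_Integration.integrable_sum) (rule phi_shift_integrable)
  have i_pT: "(\<integral>z. phi z * T z \<partial>lborel) = M"
  proof -
    have "(\<integral>z. phi z * T z \<partial>lborel) = (\<integral>z. (\<Sum>x'\<in>CX. phi (complex_of_real (sqrt \<rho>) * (x - x') + z)) \<partial>lborel)"
      unfolding T_def phi_T ..
    also have "\<dots> = (\<Sum>x'\<in>CX. \<integral>z. phi (complex_of_real (sqrt \<rho>) * (x - x') + z) \<partial>lborel)"
      by (rule Bochner_Integration.integral_sum) (rule phi_shift_integrable)
    also have "\<dots> = M" by (simp add: phi_shift_integral M_def)
    finally show ?thesis .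
  qed
  have int_h: "integrable lborel h"
    unfolding h_eq using int_ig int_pT phi_integrable by auto
  have i_h: "integral\<^sup>L lborel h = ln M - ln 2 * (\<integral>z. phi z * log 2 (T z) \<partial>lborel)"
  proof -
    have "integral\<^sup>L lborel h = (\<integral>z. phi z * T z \<partial>lborel) / M - integral\<^sup>L lborel phi
        - ln 2 * (\<integral>z. phi z * log 2 (T z) \<partial>lborel) + ln M * integral\<^sup>L lborel phi"
    proof -
      have a: "integrable lborel (\<lambda>z. phi z * T z / M)" using int_pT by simp
      have b: "integrable lborel (\<lambda>z. ln 2 * (phi z * log 2 (T z)))" using int_ig by simp
      have c: "integrable lborel (\<lambda>z. ln M * phi z)" using phi_integrable by simp
      have "integral\<^sup>L lborel h = (\<integral>z. phi z * T z / M - phi z - ln 2 * (phi z * log 2 (T z)) \<partial>lborel)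
           + (\<integral>z. ln M * phi z \<partial>lborel)"
        unfolding h_eq by (rule Bochner_Integration.integral_add) (use a b c phi_integrable in auto)
      also have "(\<integral>z. phi z * T z / M - phi z - ln 2 * (phi z * log 2 (T z)) \<partial>lborel)
          = (\<integral>z. phi z * T z / M - phi z \<partial>lborel) - (\<integral>z. ln 2 * (phi z * log 2 (T z)) \<partial>lborel)"
        by (rule Bochner_Integration.integral_diff) (use a b phi_integrable in auto)
      also have "(\<integral>z. phi z * T z / M - phi z \<partial>lborel) = (\<integral>z. phi z * T z / M \<partial>lborel) - integral\<^sup>L lborel phi"
        by (rule Bochner_Integration.integral_diff) (use a phi_integrable in auto)
      also have "(\<integral>z. phi z * T z / M \<partial>lborel) = (\<integral>z. phi z * T z \<partial>lborel) / M"
        by (rule integral_divide_zero)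
      also have "(\<integral>z. ln 2 * (phi z * log 2 (T z)) \<partial>lborel) = ln 2 * (\<integral>z. phi z * log 2 (T z) \<partial>lborel)"
        by (rule integral_mult_right_zero)
      also have "(\<integral>z. ln M * phi z \<partial>lborel) = ln M * integral\<^sup>L lborel phi"
        by (rule integral_mult_right_zero)
      finally show ?thesis .
    qed
    then show ?thesis using i_pT M by (simp add: phi_integral)
  qed
  have "0 < integral\<^sup>L lborel h"
  proof (rule integral_pos_cont[OF _ _ _ int_h])
    show "continuous_on UNIV h"
    proof -
      have Tne: "\<And>z. Tf CX \<rho> x z \<noteq> 0" using Tp by (simp add: T_def) (metis less_irrefl)
      show ?thesis
      proof -
        have "continuous_on UNIV (\<lambda>z. Tf CX \<rho> x z / M)"
          by (intro continuous_on_divide continuous_on_const) (use Tf_cont[of CX \<rho> x] M in auto)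
        then have "continuous_on UNIV (\<lambda>z. ln (Tf CX \<rho> x z / M))"
          by (rule continuous_on_ln) (use Tne M in auto)
        moreover have "continuous_on UNIV phi" unfolding phi_def[abs_def] by (intro continuous_intros)
        ultimately show ?thesis unfolding h_def[abs_def] T_def
          using \<open>continuous_on UNIV (\<lambda>z. Tf CX \<rho> x z / M)\<close>
          by (intro continuous_on_mult continuous_on_diff continuous_on_const) auto
      qed
    qed
    show "0 \<le> h z" for z
      using ln_le_minus_one[of "T z / M"] Tp[of z] M phi_nonneg[of z] by (simp add: h_def)
    have "T 0 / M \<noteq> 1" using Tf_zero_less[OF fin x c2 rho] M by (simp add: T_def M_def)
    then show "0 < h 0"
      using ln_strict[of "T 0 / M"] Tp[of 0] M phi_pos[of 0] by (simp add: h_def)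
  qed
  then have "ln 2 * (\<integral>z. phi z * log 2 (T z) \<partial>lborel) < ln M" using i_h by simp
  then have "(\<integral>z. phi z * log 2 (T z) \<partial>lborel) < ln M / ln 2"
    by (simp add: pos_less_divide_eq mult.commute)
  then show ?thesis by (simp add: T_def M_def log_def)
qed

lemma mi_pos:
  assumes fin: "finite CX" and c2: "2 \<le> card CX" and rho: "\<rho> > 0"
  shows "0 < mi_awgn CX \<rho>"
proof -
  have ne: "CX \<noteq> {}" using c2 by auto
  have "(\<Sum>x\<in>CX. \<integral>z. phi z * log 2 (Tf CX \<rho> x z) \<partial>lborel) < (\<Sum>x\<in>CX. log 2 (real (card CX)))"
    by (rule sum_strict_mono[OF fin ne]) (rule ig_less[OF fin _ c2 rho])
  then have "(\<Sum>x\<in>CX. \<integral>z. phi z * log 2 (Tf CX \<rho> x z) \<partial>lborel) < real (card CX) * log 2 (real (card CX))"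
    by simp
  moreover have "real (card CX) > 0" using c2 by simp
  ultimately have "(1 / real (card CX)) * (\<Sum>x\<in>CX. \<integral>z. phi z * log 2 (Tf CX \<rho> x z) \<partial>lborel)
      < log 2 (real (card CX))"
    by (simp add: pos_divide_less_eq mult.commute)
  then show ?thesis unfolding mi_alt by simp
qed

lemma phi_shift_bound:
  assumes "cmod w \<le> K"
  shows "phi (w + z) \<le> 2 * exp (K\<^sup>2) * cnd 1 z"
proof -
  have "cmod z \<le> cmod (w + z) + cmod w" using norm_triangle_ineq4[of "w + z" w] by simp
  then have "(cmod z)\<^sup>2 \<le> (cmod (w + z) + cmod w)\<^sup>2" by (intro power_mono) auto
  also have "\<dots> \<le> 2 * (cmod (w + z))\<^sup>2 + 2 * (cmod w)\<^sup>2"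
  proof -
    have "2 * (cmod (w + z))\<^sup>2 + 2 * (cmod w)\<^sup>2 - (cmod (w + z) + cmod w)\<^sup>2 = (cmod (w + z) - cmod w)\<^sup>2"
      by (simp add: power2_eq_square algebra_simps)
    moreover have "0 \<le> (cmod (w + z) - cmod w)\<^sup>2" by simp
    ultimately show ?thesis by linarith
  qed
  finally have a: "(cmod z)\<^sup>2 \<le> 2 * (cmod (w + z))\<^sup>2 + 2 * (cmod w)\<^sup>2" .
  have "(cmod w)\<^sup>2 \<le> K\<^sup>2" using assms by (intro power_mono) auto
  then have b: "- (cmod (w + z))\<^sup>2 \<le> K\<^sup>2 + (- (cmod z)\<^sup>2 / 2)" using a by simp
  have "phi (w + z) = (1 / pi) * exp (- (cmod (w + z))\<^sup>2)" by (simp add: phi_def)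
  also have "\<dots> \<le> (1 / pi) * exp (K\<^sup>2 + (- (cmod z)\<^sup>2 / 2))"
    using b by (intro mult_left_mono) auto
  also have "\<dots> = 2 * exp (K\<^sup>2) * cnd 1 z"
  proof -
    have "exp (K\<^sup>2 + (- (cmod z)\<^sup>2 / 2)) = exp (K\<^sup>2) * exp (- (cmod z)\<^sup>2 / 2)"
      by (rule exp_add)
    then show ?thesis by (simp add: cnd_eq)
  qed
  finally show ?thesis .
qed


lemma Tf_tendsto:
  assumes "u \<longlonglongrightarrow> a"
  shows "(\<lambda>n. Tf CX (u n) x z) \<longlonglongrightarrow> Tf CX a x z"
  unfolding Tf_def by (intro tendsto_intros assms)

lemma J_cont:
  assumes fin: "finite CX" and x: "x \<in> CX"
  shows "continuous_on {0..A} (\<lambda>\<rho>. \<integral>z. phi z * log 2 (Tf CX \<rho> x z) \<partial>lborel)"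
proof (rule continuous_on_sequentiallyI)
  fix u a assume u: "\<forall>n. u n \<in> {0..A}" and a: "a \<in> {0..A}" and lim: "u \<longlonglongrightarrow> a"
  define K where "K = sqrt A * (\<Sum>x'\<in>CX. cmod (x - x'))"
  define w where "w z = (real (card CX) * (2 * exp (K\<^sup>2) * cnd 1 z)) / ln 2" for z
  show "(\<lambda>n. \<integral>z. phi z * log 2 (Tf CX (u n) x z) \<partial>lborel) \<longlonglongrightarrow> (\<integral>z. phi z * log 2 (Tf CX a x z) \<partial>lborel)"
  proof (rule Bochner_Integration.integral_dominated_convergence[where w=w])
    show "(\<lambda>z. phi z * log 2 (Tf CX a x z)) \<in> borel_measurable lborel" by measurable
    show "\<And>n. (\<lambda>z. phi z * log 2 (Tf CX (u n) x z)) \<in> borel_measurable lborel" by measurable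
    have "integrable lborel (\<lambda>z. (real (card CX) * (2 * exp (K\<^sup>2))) * cnd 1 z / ln 2)"
      using cnd_integrable[of 1] by simp
    then show "integrable lborel w" unfolding w_def by (simp add: mult.assoc)
    show "AE z in lborel. (\<lambda>n. phi z * log 2 (Tf CX (u n) x z)) \<longlonglongrightarrow> phi z * log 2 (Tf CX a x z)"
    proof (rule AE_I2)
      fix z
      have t: "(\<lambda>n. Tf CX (u n) x z) \<longlonglongrightarrow> Tf CX a x z" by (rule Tf_tendsto[OF lim])
      have p: "0 < Tf CX a x z" using T_ge1[OF fin x, of a z] by simp
      have "(\<lambda>n. log 2 (Tf CX (u n) x z)) \<longlonglongrightarrow> log 2 (Tf CX a x z)"
        by (rule tendsto_log[OF tendsto_const t]) (use p in auto)
      then show "(\<lambda>n. phi z * log 2 (Tf CX (u n) x z)) \<longlonglongrightarrow> phi z * log 2 (Tf CX a x z)"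
        by (rule tendsto_mult[OF tendsto_const])
    qed
    show "AE z in lborel. norm (phi z * log 2 (Tf CX (u n) x z)) \<le> w z" for n
    proof (intro AE_I2)
      fix z
      have un: "0 \<le> u n" "u n \<le> A" "0 \<le> A" using u by force+
      have "norm (phi z * log 2 (Tf CX (u n) x z)) = phi z * log 2 (Tf CX (u n) x z)"
        using ig_nonneg[OF fin x] by simp
      also have "\<dots> \<le> (\<Sum>x'\<in>CX. phi (complex_of_real (sqrt (u n)) * (x - x') + z)) / ln 2"
        by (rule ig_le[OF fin x])
      also have "\<dots> \<le> (\<Sum>x'\<in>CX. 2 * exp (K\<^sup>2) * cnd 1 z) / ln 2"
      proof (intro divide_right_mono sum_mono phi_shift_bound)
        fix x' assume x': "x' \<in> CX"
        have "cmod (complex_of_real (sqrt (u n)) * (x - x')) = sqrt (u n) * cmod (x - x')"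
          using un by (simp add: norm_mult)
        also have "\<dots> \<le> sqrt A * cmod (x - x')"
          using un by (intro mult_right_mono) auto
        also have "\<dots> \<le> sqrt A * (\<Sum>x'\<in>CX. cmod (x - x'))"
          using un by (intro mult_left_mono member_le_sum x' fin) auto
        finally show "cmod (complex_of_real (sqrt (u n)) * (x - x')) \<le> K" by (simp add: K_def)
      qed auto
      also have "\<dots> = w z" by (simp add: w_def)
      finally show "norm (phi z * log 2 (Tf CX (u n) x z)) \<le> w z" .
    qed
  qed
qed

lemma mi_cont:
  assumes fin: "finite CX"
  shows "continuous_on {0..A} (mi_awgn CX)"
proof -
  have "continuous_on {0..A} (\<lambda>\<rho>. log 2 (real (card CX))
     - (1 / real (card CX)) * (\<Sum>x\<in>CX. \<integral>z. phi z * log 2 (Tf CX \<rho> x z) \<partial>lborel))"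
    by (intro continuous_on_diff continuous_on_const continuous_on_mult continuous_on_sum J_cont fin)
  then show ?thesis by (simp add: mi_alt[abs_def])
qed

lemma wf_level_nonneg: "0 < g \<Longrightarrow> 0 < \<beta> \<Longrightarrow> 0 \<le> wf_level \<beta> \<eta> g"
  by (simp add: wf_level_def)

lemma wf_level_le: "wf_level \<beta> \<eta> g \<le> \<beta> / g"
  by (simp add: wf_level_def)

lemma wf_level_zero: assumes "0 < g" "0 < \<beta>" "\<eta> \<le> 0" shows "wf_level \<beta> \<eta> g = 0"
proof -
  have "0 < 1 / g" "0 < \<beta> / g" using assms by auto
  then have "\<eta> - 1 / g \<le> 0" using assms by linarith
  then have "max (\<eta> - 1 / g) 0 = 0" by (simp add: max_def)
  then show ?thesis using \<open>0 < \<beta> / g\<close> by (simp add: wf_level_def)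
qed

lemma wf_level_sat: assumes "0 < g" "(\<beta> + 1) / g \<le> \<eta>" "0 \<le> \<beta>" shows "wf_level \<beta> \<eta> g = \<beta> / g"
proof -
  have "(\<beta> + 1) / g = \<beta> / g + 1 / g" by (simp add: add_divide_distrib)
  then have a: "\<beta> / g \<le> \<eta> - 1 / g" using assms by simp
  have "0 \<le> \<beta> / g" using assms by simp
  then have "max (\<eta> - 1 / g) 0 = \<eta> - 1 / g" using a by simp
  then show ?thesis using a by (simp add: wf_level_def)
qed

lemma wf_level_cont: "continuous_on S (\<lambda>\<eta>. wf_level \<beta> \<eta> g)"
  unfolding wf_level_def by (intro continuous_intros)

lemma eta_exists:
  fixes CX :: "complex set" and \<gamma> :: "nat \<Rightarrow> real"
  assumes B: "B \<ge> 1" and beta: "\<beta> > 0" and R: "mi_awgn CX \<beta> \<ge> R"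
    and mi0: "mi_awgn CX 0 \<le> R"
    and micont: "continuous_on {0..\<beta>} (mi_awgn CX)"
    and gpos: "\<And>b. b < B \<Longrightarrow> 0 < \<gamma> b"
  shows "(1 / real B) * (\<Sum>b<B. mi_awgn CX (wf_level \<beta> (wf_eta CX B R \<beta> \<gamma>) (\<gamma> b) * \<gamma> b)) = R"
proof -
  define F where "F \<eta> = (1 / real B) * (\<Sum>b<B. mi_awgn CX (wf_level \<beta> \<eta> (\<gamma> b) * \<gamma> b))" for \<eta>
  define etaM where "etaM = (\<Sum>b<B. (\<beta> + 1) / \<gamma> b)"
  have F0: "F 0 = mi_awgn CX 0"
    using B gpos beta by (simp add: F_def wf_level_zero)
  have FM: "F etaM = mi_awgn CX \<beta>"
  proof -
    have "wf_level \<beta> etaM (\<gamma> b) * \<gamma> b = \<beta>" if b: "b < B" for b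
    proof -
      have "(\<beta> + 1) / \<gamma> b \<le> etaM" unfolding etaM_def
        by (rule member_le_sum[where f="\<lambda>b. (\<beta> + 1) / \<gamma> b"]) (use b gpos beta in \<open>auto intro: less_imp_le\<close>)
      then show ?thesis using gpos[OF b] beta by (simp add: wf_level_sat)
    qed
    then show ?thesis using B by (simp add: F_def)
  qed
  have etaM0: "0 \<le> etaM" unfolding etaM_def using gpos beta
    by (intro sum_nonneg) (auto intro: less_imp_le)
  have cont: "continuous_on {0..etaM} F"
    unfolding F_def
  proof (intro continuous_on_mult continuous_on_const continuous_on_sum)
    fix b assume b: "b \<in> {..<B}"
    show "continuous_on {0..etaM} (\<lambda>\<eta>. mi_awgn CX (wf_level \<beta> \<eta> (\<gamma> b) * \<gamma> b))"
    proof (rule continuous_on_compose2[OF micont])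
      show "continuous_on {0..etaM} (\<lambda>\<eta>. wf_level \<beta> \<eta> (\<gamma> b) * \<gamma> b)"
        by (intro continuous_on_mult continuous_on_const wf_level_cont)
      have g: "0 < \<gamma> b" using gpos b by simp
      show "(\<lambda>\<eta>. wf_level \<beta> \<eta> (\<gamma> b) * \<gamma> b) ` {0..etaM} \<subseteq> {0..\<beta>}"
      proof clarify
        fix \<eta>
        have "0 \<le> wf_level \<beta> \<eta> (\<gamma> b)" using g beta by (rule wf_level_nonneg)
        moreover have "wf_level \<beta> \<eta> (\<gamma> b) * \<gamma> b \<le> \<beta> / \<gamma> b * \<gamma> b"
          using g by (intro mult_right_mono wf_level_le) auto
        ultimately show "wf_level \<beta> \<eta> (\<gamma> b) * \<gamma> b \<in> {0..\<beta>}" using g by auto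
      qed
    qed
  qed
  have "\<exists>\<eta>. 0 \<le> \<eta> \<and> \<eta> \<le> etaM \<and> F \<eta> = R"
    by (rule IVT'[OF _ _ etaM0 cont]) (use F0 FM mi0 R in auto)
  then have ex: "\<exists>\<eta>. F \<eta> = R" by blast
  show ?thesis
    unfolding wf_eta_def using someI_ex[OF ex] by (simp add: F_def)
qed


lemma recip_le_prod:
  fixes S0 :: "nat set" and \<gamma> :: "nat \<Rightarrow> real"
  assumes fin: "finite S0" and card: "card S0 = d" and d: "d \<ge> 1" and c: "0 < c"
    and le: "\<And>b. b \<in> S0 \<Longrightarrow> \<gamma> b \<le> c" and pos: "\<And>b. b \<in> S0 \<Longrightarrow> 0 < \<gamma> b"
  shows "1 / c \<le> (\<Prod>b\<in>S0. \<gamma> b powr (-1 / real d))"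
proof -
  have "(\<Prod>b\<in>S0. c powr (-1 / real d)) \<le> (\<Prod>b\<in>S0. \<gamma> b powr (-1 / real d))"
  proof (rule prod_mono)
    fix b assume b: "b \<in> S0"
    show "0 \<le> c powr (-1 / real d) \<and> c powr (-1 / real d) \<le> \<gamma> b powr (-1 / real d)"
      using powr_mono2'[of "-1 / real d" "\<gamma> b" c] le[OF b] pos[OF b] d by auto
  qed
  moreover have "(\<Prod>b\<in>S0. c powr (-1 / real d)) = 1 / c"
  proof -
    have "(\<Prod>b\<in>S0. c powr (-1 / real d)) = (c powr (-1 / real d)) ^ d" using card by simp
    also have "\<dots> = c powr (real d * (-1 / real d))" using c by (simp add: powr_power)
    also have "\<dots> = c powr (-1)" using d by simp
    also have "\<dots> = 1 / c" using c by (simp add: powr_minus_divide)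
    finally show ?thesis .
  qed
  ultimately show ?thesis by simp
qed

lemma power_bound:
  fixes CX :: "complex set" and \<gamma> :: "nat \<Rightarrow> real"
  assumes B: "B \<ge> 1" and beta: "\<beta> > 0" and Rpos: "R > 0" and RI: "R \<le> mi_awgn CX \<beta>"
    and mi0: "mi_awgn CX 0 = 0"
    and mipos: "\<And>\<rho>. 0 < \<rho> \<Longrightarrow> 0 < mi_awgn CX \<rho>"
    and Feta: "(1 / real B) * (\<Sum>b<B. mi_awgn CX (wf_level \<beta> \<eta> (\<gamma> b) * \<gamma> b)) = R"
    and gpos: "\<And>b. b < B \<Longrightarrow> 0 < \<gamma> b"
    and d_def: "d = nat (1 + \<lfloor>real B * (1 - R / mi_awgn CX \<beta>)\<rfloor>)"
  shows "(1 / real B) * (\<Sum>b<B. wf_level \<beta> \<eta> (\<gamma> b))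
       \<le> (\<beta> + 1) * (\<Sum>S\<in>{S. S \<subseteq> {..<B} \<and> card S = d}. \<Prod>b\<in>S. \<gamma> b powr (-1 / real d))"
proof -
  define I where "I = mi_awgn CX \<beta>"
  have I: "0 < I" using RI Rpos by (simp add: I_def)
  define q where "q = R / I"
  have q: "0 < q" "q \<le> 1" using I Rpos RI by (auto simp: q_def I_def)
  define fl where "fl = \<lfloor>real B * (1 - q)\<rfloor>"
  have fl0: "0 \<le> fl" using q by (simp add: fl_def)
  have flB: "fl \<le> int B - 1"
  proof -
    have "real B * (1 - q) < real B" using q B by simp
    then have "fl < int B" unfolding fl_def by (simp add: floor_less_iff)
    then show ?thesis by simp
  qed
  have fl_le: "real_of_int fl \<le> real B * (1 - q)" unfolding fl_def by simp
  have dfl: "int d = 1 + fl" using fl0 by (simp add: d_def fl_def q_def I_def)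
  have d1: "1 \<le> d" and dB: "d \<le> B" using dfl fl0 flB by linarith+
  have kI: "real B * R \<le> real (B + 1 - d) * I"
  proof -
    have "real (B + 1 - d) = real B - real_of_int fl" using dfl dB by linarith
    also have "\<dots> \<ge> real B * q" using fl_le by (simp add: algebra_simps)
    finally have "real B * q * I \<le> real (B + 1 - d) * I" using I by (intro mult_right_mono) auto
    then show ?thesis using I by (simp add: q_def)
  qed
  define SS where "SS = {S. S \<subseteq> {..<B} \<and> card S = d}"
  have SSfin: "finite SS" unfolding SS_def by (rule finite_subset[of _ "Pow {..<B}"]) auto
  have SSne: "{..<d} \<in> SS" using dB by (auto simp: SS_def)
  define mx where "mx S = Max (\<gamma> ` S)" for S
  define c where "c = Min (mx ` SS)"
  have c_in: "c \<in> mx ` SS" unfolding c_def using SSfin SSne by (intro Min_in) auto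
  then obtain S0 where S0: "S0 \<in> SS" "mx S0 = c" by auto
  have c_le: "c \<le> mx S" if "S \<in> SS" for S unfolding c_def using SSfin that by (intro Min_le) auto
  have S0sub: "S0 \<subseteq> {..<B}" and S0card: "card S0 = d" using S0 by (auto simp: SS_def)
  have S0fin: "finite S0" using S0sub finite_subset by blast
  have S0ne: "S0 \<noteq> {}" using S0card d1 by auto
  have S0le: "\<gamma> b \<le> c" if "b \<in> S0" for b
    using S0 that S0fin by (auto simp: mx_def intro!: Max_ge)
  have cpos: "0 < c"
  proof -
    obtain b where "b \<in> S0" using S0ne by auto
    then show ?thesis using S0le[of b] gpos[of b] S0sub by force
  qed
  define U where "U = {b. b < B \<and> c \<le> \<gamma> b}"
  have Ufin: "finite U" by (simp add: U_def)
  have Usub: "U \<subseteq> {..<B}" by (auto simp: U_def)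
  have cardU: "B + 1 - d \<le> card U"
  proof (rule ccontr)
    assume "\<not> B + 1 - d \<le> card U"
    then have cu: "card U + d \<le> B" using dB by linarith
    define L where "L = {..<B} - U"
    have "card L = B - card U" unfolding L_def using Usub by (simp add: card_Diff_subset Ufin)
    then have "d \<le> card L" using cu by linarith
    then obtain T where T: "T \<subseteq> L" "card T = d" "finite T" by (rule obtain_subset_with_card_n)
    have "T \<in> SS" using T by (auto simp: SS_def L_def)
    then have "c \<le> mx T" by (rule c_le)
    moreover have "mx T < c"
    proof -
      have "T \<noteq> {}" using T d1 by auto
      then have "mx T \<in> \<gamma> ` T" unfolding mx_def using T by (intro Max_in) auto
      then show ?thesis using T by (auto simp: L_def U_def)
    qed
    ultimately show False by simp
  qed
  define eta0 where "eta0 = (\<beta> + 1) / c"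
  have eta00: "0 \<le> eta0" using cpos beta by (simp add: eta0_def)
  have each: "wf_level \<beta> \<eta> (\<gamma> b) \<le> eta0" if b: "b < B" for b
  proof (cases "\<eta> \<le> eta0")
    case True
    have "0 < 1 / \<gamma> b" using gpos[OF b] by simp
    then have "\<eta> - 1 / \<gamma> b \<le> eta0" using True by linarith
    then have "max (\<eta> - 1 / \<gamma> b) 0 \<le> eta0" using eta00 by simp
    then show ?thesis unfolding wf_level_def by linarith
  next
    case False
    have sat: "wf_level \<beta> \<eta> (\<gamma> b') = \<beta> / \<gamma> b'" if b': "b' \<in> U" for b'
    proof -
      have g: "c \<le> \<gamma> b'" "b' < B" using b' by (auto simp: U_def)
      have "(\<beta> + 1) / \<gamma> b' \<le> (\<beta> + 1) / c" using g cpos beta by (intro divide_left_mono) auto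
      then show ?thesis using False g gpos[of b'] beta by (intro wf_level_sat) (auto simp: eta0_def)
    qed
    define mv where "mv b' = mi_awgn CX (wf_level \<beta> \<eta> (\<gamma> b') * \<gamma> b')" for b'
    have mvU: "mv b' = I" if "b' \<in> U" for b'
      using sat[OF that] gpos[of b'] that by (simp add: mv_def I_def U_def)
    have mvnn: "0 \<le> mv b'" if "b' < B" for b'
    proof -
      have "0 \<le> wf_level \<beta> \<eta> (\<gamma> b') * \<gamma> b'"
        using wf_level_nonneg[OF gpos[OF that] beta] gpos[OF that] by simp
      then show ?thesis using mi0 mipos[of "wf_level \<beta> \<eta> (\<gamma> b') * \<gamma> b'"]
        by (cases "wf_level \<beta> \<eta> (\<gamma> b') * \<gamma> b' = 0") (auto simp: mv_def)
    qed
    define L where "L = {..<B} - U"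
    have sumB: "(\<Sum>b'<B. mv b') = real B * R" using Feta B by (simp add: mv_def field_simps)
    have split: "(\<Sum>b'<B. mv b') = (\<Sum>b'\<in>U. mv b') + (\<Sum>b'\<in>L. mv b')"
      unfolding L_def using Usub by (simp add: sum.subset_diff)
    have sU: "(\<Sum>b'\<in>U. mv b') = real (card U) * I" using mvU by simp
    have "real (B + 1 - d) * I \<le> real (card U) * I" using cardU I by (intro mult_right_mono) auto
    then have "(\<Sum>b'\<in>L. mv b') \<le> 0" using split sumB sU kI by linarith
    moreover have "\<forall>b'\<in>L. 0 \<le> mv b'" using mvnn by (auto simp: L_def)
    ultimately have L0: "\<forall>b'\<in>L. mv b' = 0"
      using sum_nonneg_eq_0_iff[of L mv] sum_nonneg[of L mv] by (auto simp: L_def)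
    show ?thesis
    proof (cases "b \<in> U")
      case True
      have "\<beta> / \<gamma> b \<le> \<beta> / c" using True cpos beta by (intro divide_left_mono) (auto simp: U_def)
      also have "\<dots> \<le> eta0" using cpos by (simp add: eta0_def divide_right_mono)
      finally show ?thesis using sat[OF True] by simp
    next
      case nU: False
      then have "b \<in> L" using b by (simp add: L_def)
      then have mz: "mv b = 0" using L0 by auto
      have wnn: "0 \<le> wf_level \<beta> \<eta> (\<gamma> b)" by (rule wf_level_nonneg[OF gpos[OF b] beta])
      have "wf_level \<beta> \<eta> (\<gamma> b) = 0"
      proof (rule ccontr)
        assume "wf_level \<beta> \<eta> (\<gamma> b) \<noteq> 0"
        then have "0 < wf_level \<beta> \<eta> (\<gamma> b) * \<gamma> b" using wnn gpos[OF b] by simp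
        then have "0 < mv b" unfolding mv_def by (rule mipos)
        then show False using mz by simp
      qed
      then show ?thesis using eta00 by simp
    qed
  qed
  have "(\<Sum>b<B. wf_level \<beta> \<eta> (\<gamma> b)) \<le> (\<Sum>b<B. eta0)" by (intro sum_mono each) auto
  then have "(1 / real B) * (\<Sum>b<B. wf_level \<beta> \<eta> (\<gamma> b)) \<le> eta0" using B by (simp add: field_simps)
  also have "eta0 = (\<beta> + 1) * (1 / c)" by (simp add: eta0_def)
  also have "\<dots> \<le> (\<beta> + 1) * (\<Prod>b\<in>S0. \<gamma> b powr (-1 / real d))"
  proof -
    have pos0: "\<And>b. b \<in> S0 \<Longrightarrow> 0 < \<gamma> b" using gpos S0sub by auto
    show ?thesis using recip_le_prod[OF S0fin S0card d1 cpos S0le pos0] beta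
      by (intro mult_left_mono) auto
  qed
  also have "\<dots> \<le> (\<beta> + 1) * (\<Sum>S\<in>SS. \<Prod>b\<in>S. \<gamma> b powr (-1 / real d))"
    using beta by (intro mult_left_mono member_le_sum[OF S0(1) _ SSfin]) (auto intro: prod_nonneg)
  finally show ?thesis by (simp add: SS_def)
qed

lemma emult: "0 \<le> a \<Longrightarrow> 0 \<le> b \<Longrightarrow> ennreal a * ennreal b = ennreal (a * b)"
  by (simp add: ennreal_mult)

lemma gamma_scaled:
  fixes s m :: real
  assumes s: "0 < s" and m: "0 < m"
  shows "(\<integral>\<^sup>+g. ennreal (if 0 < g then g powr (s - 1) * exp (- m * g) else 0) \<partial>lborel)
       = ennreal (1 / m) * ennreal (m powr (1 - s)) * ennreal (Gamma s)"
proof -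
  define f where "f g = ennreal (if 0 < g then g powr (s - 1) * exp (- m * g) else 0)" for g :: real
  have fm: "f \<in> borel_measurable borel" unfolding f_def by measurable
  have "(\<integral>\<^sup>+g. f g \<partial>lborel) = ennreal \<bar>1 / m\<bar> * (\<integral>\<^sup>+x. f (0 + (1 / m) * x) \<partial>lborel)"
    using m by (intro nn_integral_real_affine[OF fm]) auto
  also have "(\<lambda>x. f (0 + (1 / m) * x)) = (\<lambda>x. ennreal (m powr (1 - s)) * ennreal (indicator {0..} x * x powr (s - 1) / exp x))"
  proof
    fix x :: real
    show "f (0 + (1 / m) * x) = ennreal (m powr (1 - s)) * ennreal (indicator {0..} x * x powr (s - 1) / exp x)"
    proof (cases "0 < x")
      case True
      have "(x / m) powr (s - 1) = x powr (s - 1) / m powr (s - 1)" using True m by (simp add: powr_divide)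
      also have "\<dots> = m powr (1 - s) * x powr (s - 1)"
        using m by (simp add: powr_diff powr_minus_divide field_simps)
      finally have e: "(x / m) powr (s - 1) = m powr (1 - s) * x powr (s - 1)" .
      have "f (0 + (1 / m) * x) = ennreal ((x / m) powr (s - 1) * exp (- x))"
        using True m by (simp add: f_def)
      also have "\<dots> = ennreal (m powr (1 - s) * (x powr (s - 1) / exp x))"
        by (simp add: e exp_minus field_simps)
      also have "\<dots> = ennreal (m powr (1 - s)) * ennreal (indicator {0..} x * x powr (s - 1) / exp x)"
        using True by (subst emult) auto
      finally show ?thesis .
    next
      case False
      then have "\<not> 0 < (1 / m) * x" using m by (simp add: zero_less_mult_iff zero_less_divide_iff)
      moreover have "indicator {0..} x * x powr (s - 1) / exp x = (0::real)"
        using False by (cases "x = 0") (auto simp: indicator_def)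
      ultimately show ?thesis by (simp add: f_def)
    qed
  qed
  also have "(\<integral>\<^sup>+x. ennreal (m powr (1 - s)) * ennreal (indicator {0..} x * x powr (s - 1) / exp x) \<partial>lborel)
     = ennreal (m powr (1 - s)) * ennreal (Gamma s)"
    by (subst nn_integral_cmult) (auto simp: Gamma_conv_nn_integral_real[OF s])
  finally show ?thesis using m by (simp add: f_def mult.assoc)
qed

definition nak_dens :: "real \<Rightarrow> real \<Rightarrow> real" where
  "nak_dens m g = (if g > 0 then m powr m * g powr (m - 1) / Gamma m * exp (- m * g) else 0)"

lemma nak_dens_nonneg: "0 < m \<Longrightarrow> 0 \<le> nak_dens m g"
  by (simp add: nak_dens_def Gamma_real_pos)

lemma nak_eq: "nakagami_gain m = density lborel (\<lambda>g. ennreal (nak_dens m g))"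
  by (simp add: nakagami_gain_def nak_dens_def)

lemma nak_dens_measurable[measurable]: "nak_dens m \<in> borel_measurable borel"
  unfolding nak_dens_def[abs_def] by measurable

lemma nak_moment:
  fixes m a :: real
  assumes m: "0 < m" and a: "0 < m + a"
  shows "(\<integral>\<^sup>+g. ennreal (nak_dens m g) * ennreal (g powr a) \<partial>lborel)
     = ennreal (m powr m / Gamma m) * (ennreal (1 / m) * ennreal (m powr (1 - (m + a))) * ennreal (Gamma (m + a)))"
proof -
  have G: "0 < Gamma m" using m by (simp add: Gamma_real_pos)
  have "(\<lambda>g. ennreal (nak_dens m g) * ennreal (g powr a)) =
      (\<lambda>g. ennreal (m powr m / Gamma m) * ennreal (if 0 < g then g powr ((m + a) - 1) * exp (- m * g) else 0))"
  proof
    fix g :: real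
    show "ennreal (nak_dens m g) * ennreal (g powr a) =
      ennreal (m powr m / Gamma m) * ennreal (if 0 < g then g powr ((m + a) - 1) * exp (- m * g) else 0)"
    proof (cases "0 < g")
      case True
      have "g powr (m - 1) * g powr a = g powr ((m + a) - 1)" using True by (simp add: powr_add[symmetric] algebra_simps)
      then have "nak_dens m g * g powr a = m powr m / Gamma m * (g powr ((m + a) - 1) * exp (- m * g))"
        using True by (simp add: nak_dens_def field_simps)
      then show ?thesis using True G nak_dens_nonneg[OF m, of g] by (simp add: emult)
    qed (simp add: nak_dens_def)
  qed
  then show ?thesis using gamma_scaled[OF a m] by (simp add: nn_integral_cmult)
qed

lemma nak_prob: assumes m: "0 < m" shows "prob_space (nakagami_gain m)"
proof
  have G: "0 < Gamma m" using m by (simp add: Gamma_real_pos)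
  have "emeasure (nakagami_gain m) (space (nakagami_gain m)) = (\<integral>\<^sup>+g. ennreal (nak_dens m g) * ennreal (g powr 0) \<partial>lborel)"
  proof -
    have "emeasure (nakagami_gain m) (space (nakagami_gain m)) = (\<integral>\<^sup>+g. ennreal (nak_dens m g) \<partial>lborel)"
      by (simp add: nak_eq emeasure_density)
    also have "\<dots> = (\<integral>\<^sup>+g. ennreal (nak_dens m g) * ennreal (g powr 0) \<partial>lborel)"
      by (intro nn_integral_cong) (auto simp: nak_dens_def)
    finally show ?thesis .
  qed
  also have "\<dots> = ennreal (m powr m / Gamma m) * (ennreal (1 / m) * ennreal (m powr (1 - m)) * ennreal (Gamma m))"
    using nak_moment[OF m, of 0] m by simp
  also have "\<dots> = ennreal (m powr m / Gamma m * (1 / m * m powr (1 - m) * Gamma m))"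
    using m G by (simp add: emult)
  also have "m powr m / Gamma m * (1 / m * m powr (1 - m) * Gamma m) = 1"
  proof -
    have Gne: "Gamma m \<noteq> 0" using G by linarith
    have "m powr m * m powr (1 - m) = m" using m by (simp add: powr_add[symmetric])
    then show ?thesis using m Gne by (simp add: field_simps)
  qed
  finally show "emeasure (nakagami_gain m) (space (nakagami_gain m)) = 1" by simp
qed

lemma nak_AE_pos: "AE g in nakagami_gain m. 0 < g"
  unfolding nak_eq by (subst AE_density) (auto simp: nak_dens_def)

lemma nak_moment_finite:
  fixes m a :: real
  assumes m: "0 < m" and a: "0 < m + a"
  shows "\<exists>r. (\<integral>\<^sup>+g. ennreal (g powr a) \<partial>nakagami_gain m) = ennreal r"
proof -
  have "(\<integral>\<^sup>+g. ennreal (g powr a) \<partial>nakagami_gain m) = (\<integral>\<^sup>+g. ennreal (nak_dens m g) * ennreal (g powr a) \<partial>lborel)"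
    unfolding nak_eq by (rule nn_integral_density) auto
  also have "\<dots> = ennreal (m powr m / Gamma m * (1 / m * m powr (1 - (m + a)) * Gamma (m + a)))"
    using nak_moment[OF m a] m a by (simp add: emult Gamma_real_pos)
  finally show ?thesis by blast
qed

lemma mi_single: "mi_awgn {c} \<rho> = 0"
  by (simp add: mi_awgn_def)

lemma card_ge2:
  assumes fin: "finite CX" and ne: "CX \<noteq> {}" and pos: "0 < mi_awgn CX \<beta>"
  shows "2 \<le> card CX"
proof (rule ccontr)
  assume "\<not> 2 \<le> card CX"
  moreover have "card CX \<noteq> 0" using fin ne by simp
  ultimately have "card CX = 1" by linarith
  then obtain c where "CX = {c}" by (rule card_1_singletonE)
  then show False using pos mi_single by simp
qed

lemma fading_facts:
  fixes m :: real and B d :: nat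
  assumes m: "0 < m" and dm: "real d * m > 1"
  defines "G \<equiv> \<lambda>\<gamma>::nat \<Rightarrow> real. (\<Sum>S\<in>{S. S \<subseteq> {..<B} \<and> card S = d}. \<Prod>b\<in>S. \<gamma> b powr (-1 / real d))"
  shows "prob_space (fading m B)"
    and "AE \<gamma> in fading m B. \<forall>b\<in>{..<B}. 0 < \<gamma> b"
    and "G \<in> borel_measurable (fading m B)"
    and "(\<integral>\<^sup>+\<gamma>. ennreal (G \<gamma>) \<partial>fading m B) < \<infinity>"
proof -
  interpret N: prob_space "nakagami_gain m" by (rule nak_prob[OF m])
  interpret PP: product_prob_space "\<lambda>_::nat. nakagami_gain m" "{..<B}"
    by unfold_locales
  show "prob_space (fading m B)" unfolding fading_def by (rule PP.P.prob_space_axioms)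
  show "AE \<gamma> in fading m B. \<forall>b\<in>{..<B}. 0 < \<gamma> b"
    unfolding fading_def
    by (intro eventually_ball_finite ballI AE_PiM_component nak_AE_pos) (auto intro: nak_prob[OF m])
  define SS where "SS = {S. S \<subseteq> {..<B} \<and> card S = d}"
  have SSfin: "finite SS" unfolding SS_def by (rule finite_subset[of _ "Pow {..<B}"]) auto
  have mb: "(\<lambda>\<gamma>::nat\<Rightarrow>real. \<gamma> b powr e) \<in> borel_measurable (fading m B)" if "b < B" for b e
  proof -
    have "(\<lambda>\<gamma>::nat\<Rightarrow>real. \<gamma> b) \<in> measurable (fading m B) (nakagami_gain m)"
      unfolding fading_def using that by (intro measurable_component_singleton) auto
    moreover have "(\<lambda>x::real. x powr e) \<in> borel_measurable (nakagami_gain m)"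
      by (simp add: nak_eq)
    ultimately show ?thesis by (rule measurable_compose)
  qed
  show "G \<in> borel_measurable (fading m B)"
    unfolding G_def SS_def[symmetric]
  proof (intro borel_measurable_sum borel_measurable_prod)
    fix S b assume "S \<in> SS" "b \<in> S"
    then have "b < B" by (auto simp: SS_def)
    then show "(\<lambda>\<gamma>::nat\<Rightarrow>real. \<gamma> b powr (-1 / real d)) \<in> borel_measurable (fading m B)" by (rule mb)
  qed
  define e where "e = -1 / real d"
  have d0: "0 < real d" using dm m by (auto intro: ccontr)
  have me: "0 < m + e"
  proof -
    have "1 / real d < m" using dm d0 by (simp add: divide_less_eq mult.commute)
    then show ?thesis by (simp add: e_def)
  qed
  obtain r0 where r0: "(\<integral>\<^sup>+g. ennreal (g powr e) \<partial>nakagami_gain m) = ennreal r0"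
    using nak_moment_finite[OF m me] by blast
  define r where "r = max 0 r0"
  have r: "(\<integral>\<^sup>+g. ennreal (g powr e) \<partial>nakagami_gain m) = ennreal r" "0 \<le> r"
    using r0 by (auto simp: r_def ennreal_max_0)
  define f where "f S b g = (if b \<in> S then ennreal (g powr e) else 1)" for S :: "nat set" and b :: nat and g :: real
  have fint: "integral\<^sup>N (nakagami_gain m) (f S b) = ennreal (if b \<in> S then r else 1)" for S b
  proof (cases "b \<in> S")
    case True
    then have "f S b = (\<lambda>g. ennreal (g powr e))" by (auto simp: f_def)
    then show ?thesis using True r by simp
  next
    case False
    then have "f S b = (\<lambda>g. 1)" by (auto simp: f_def)
    then show ?thesis using False N.emeasure_space_1 by simp
  qed
  have fmeas: "f S b \<in> borel_measurable (nakagami_gain m)" for S b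
    unfolding f_def by (simp add: nak_eq)
  have eqG: "ennreal (G \<gamma>) = (\<Sum>S\<in>SS. \<Prod>b\<in>{..<B}. f S b (\<gamma> b))" for \<gamma>
  proof -
    have "ennreal (G \<gamma>) = (\<Sum>S\<in>SS. ennreal (\<Prod>b\<in>S. \<gamma> b powr e))"
      unfolding G_def SS_def[symmetric] e_def by (subst sum_ennreal) (auto intro: prod_nonneg)
    also have "\<dots> = (\<Sum>S\<in>SS. \<Prod>b\<in>{..<B}. f S b (\<gamma> b))"
    proof (rule sum.cong[OF refl])
      fix S assume S: "S \<in> SS"
      have "ennreal (\<Prod>b\<in>S. \<gamma> b powr e) = (\<Prod>b\<in>S. ennreal (\<gamma> b powr e))"
        by (subst prod_ennreal) auto
      also have "\<dots> = (\<Prod>b\<in>S. f S b (\<gamma> b))" by (simp add: f_def)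
      also have "\<dots> = (\<Prod>b\<in>{..<B}. f S b (\<gamma> b))"
        using S by (intro prod.mono_neutral_right[symmetric]) (auto simp: SS_def f_def)
      finally show "ennreal (\<Prod>b\<in>S. \<gamma> b powr e) = (\<Prod>b\<in>{..<B}. f S b (\<gamma> b))" .
    qed
    finally show ?thesis .
  qed
  have "(\<integral>\<^sup>+\<gamma>. ennreal (G \<gamma>) \<partial>fading m B) = (\<integral>\<^sup>+\<gamma>. (\<Sum>S\<in>SS. \<Prod>b\<in>{..<B}. f S b (\<gamma> b)) \<partial>fading m B)"
    by (simp add: eqG)
  also have "\<dots> = (\<Sum>S\<in>SS. \<integral>\<^sup>+\<gamma>. (\<Prod>b\<in>{..<B}. f S b (\<gamma> b)) \<partial>fading m B)"
  proof (rule nn_integral_sum)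
    fix S show "(\<lambda>\<gamma>. \<Prod>b\<in>{..<B}. f S b (\<gamma> b)) \<in> borel_measurable (fading m B)"
    proof (rule borel_measurable_prod_ennreal)
      fix b assume b: "b \<in> {..<B}"
      have "(\<lambda>\<gamma>::nat\<Rightarrow>real. \<gamma> b) \<in> measurable (fading m B) (nakagami_gain m)"
        unfolding fading_def using b by (intro measurable_component_singleton) auto
      then show "(\<lambda>\<gamma>. f S b (\<gamma> b)) \<in> borel_measurable (fading m B)"
        by (rule measurable_compose) (rule fmeas)
    qed
  qed
  also have "\<dots> = (\<Sum>S\<in>SS. \<Prod>b\<in>{..<B}. integral\<^sup>N (nakagami_gain m) (f S b))"
    unfolding fading_def by (intro sum.cong refl PP.product_nn_integral_prod fmeas) auto
  also have "\<dots> = ennreal (\<Sum>S\<in>SS. \<Prod>b\<in>{..<B}. (if b \<in> S then r else 1))"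
    using r(2) by (simp add: fint prod_ennreal prod_nonneg)
  finally show "(\<integral>\<^sup>+\<gamma>. ennreal (G \<gamma>) \<partial>fading m B) < \<infinity>" by simp
qed

theorem corollary2:
  fixes CX :: "complex set" and m \<beta> R :: real and B :: nat
  assumes "finite CX" and "CX \<noteq> {}"
    and "B \<ge> 1"
    and "m > 0" and "\<beta> > 0" and "R > 0" and "mi_awgn CX \<beta> \<ge> R"
    and "real_of_int (1 + \<lfloor>real B * (1 - R / mi_awgn CX \<beta>)\<rfloor>) > 1 / m"
  shows "(\<exists>L. L < \<infinity> \<and> ((\<lambda>s. avg_power CX m B R \<beta> s) \<longlongrightarrow> L) at_top)
       \<and> ((\<lambda>s. outage_prob CX m B R \<beta> s) \<longlongrightarrow> 0) at_top"
proof -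
  note fin = assms(1) and ne = assms(2) and B = assms(3) and m = assms(4) and beta = assms(5)
    and Rpos = assms(6) and RI = assms(7) and dcond = assms(8)
  have Ipos: "0 < mi_awgn CX \<beta>" using RI Rpos by linarith
  have c2: "2 \<le> card CX" by (rule card_ge2[OF fin ne Ipos])
  have mi0: "mi_awgn CX 0 = 0" by (rule mi_zero[OF fin ne])
  have mipos: "\<And>\<rho>. 0 < \<rho> \<Longrightarrow> 0 < mi_awgn CX \<rho>" by (rule mi_pos[OF fin c2])
  have micont: "continuous_on {0..\<beta>} (mi_awgn CX)" by (rule mi_cont[OF fin])
  define d where "d = nat (1 + \<lfloor>real B * (1 - R / mi_awgn CX \<beta>)\<rfloor>)"
  have fl0: "0 \<le> \<lfloor>real B * (1 - R / mi_awgn CX \<beta>)\<rfloor>"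
    using RI Ipos by (simp add: divide_le_eq_1)
  have dreal: "real d = real_of_int (1 + \<lfloor>real B * (1 - R / mi_awgn CX \<beta>)\<rfloor>)"
    using fl0 by (simp add: d_def)
  have dm: "real d * m > 1"
  proof -
    have "1 / m < real d" using dcond dreal by simp
    then show ?thesis using m by (simp add: divide_less_eq)
  qed
  define SS where "SS = {S. S \<subseteq> {..<B} \<and> card S = d}"
  define G0 where "G0 \<gamma> = (\<Sum>S\<in>SS. \<Prod>b\<in>S. \<gamma> b powr (-1 / real d))" for \<gamma> :: "nat \<Rightarrow> real"
  define G where "G \<gamma> = (\<beta> + 1) * G0 \<gamma>" for \<gamma>
  note ff = fading_facts[OF m dm, of B, folded SS_def, folded G0_def[abs_def]]
  interpret P: prob_space "fading m B" by (rule ff(1))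
  have G0nn: "0 \<le> G0 \<gamma>" for \<gamma> unfolding G0_def by (intro sum_nonneg prod_nonneg) auto
  have Gnn: "0 \<le> G \<gamma>" for \<gamma> unfolding G_def using G0nn beta by simp
  have Gmeas: "G \<in> borel_measurable (fading m B)" unfolding G_def[abs_def] using ff(3) by measurable
  have Gfin: "(\<integral>\<^sup>+\<gamma>. ennreal (G \<gamma>) \<partial>fading m B) < \<infinity>"
  proof -
    have "(\<integral>\<^sup>+\<gamma>. ennreal (G \<gamma>) \<partial>fading m B) = ennreal (\<beta> + 1) * (\<integral>\<^sup>+\<gamma>. ennreal (G0 \<gamma>) \<partial>fading m B)"
      unfolding G_def using beta G0nn ff(3) by (subst nn_integral_cmult[symmetric]) (auto simp: ennreal_mult)
    moreover have "(\<integral>\<^sup>+\<gamma>. ennreal (G0 \<gamma>) \<partial>fading m B) < \<infinity>"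
      using ff(4) by (simp add: G0_def)
    ultimately show ?thesis by (simp add: ennreal_mult_less_top)
  qed
  define W where "W \<gamma> = (1 / real B) * (\<Sum>b<B. wp_tw CX B R \<beta> \<gamma> b)" for \<gamma>
  have key: "W \<gamma> \<le> G \<gamma> \<and> 0 \<le> W \<gamma> \<and>
      (1 / real B) * (\<Sum>b<B. mi_awgn CX (wp_tw CX B R \<beta> \<gamma> b * \<gamma> b)) = R"
    if gpos: "\<forall>b\<in>{..<B}. 0 < \<gamma> b" for \<gamma>
  proof -
    have gp: "\<And>b. b < B \<Longrightarrow> 0 < \<gamma> b" using gpos by auto
    have F: "(1 / real B) * (\<Sum>b<B. mi_awgn CX (wf_level \<beta> (wf_eta CX B R \<beta> \<gamma>) (\<gamma> b) * \<gamma> b)) = R"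
      by (rule eta_exists[OF B beta RI _ micont gp]) (use mi0 Rpos in auto)
    have "W \<gamma> \<le> (\<beta> + 1) * G0 \<gamma>"
      unfolding W_def wp_tw_def G0_def SS_def
      by (rule power_bound[OF B beta Rpos RI mi0 mipos F gp d_def])
    moreover have "0 \<le> W \<gamma>" unfolding W_def wp_tw_def using B
      by (intro mult_nonneg_nonneg sum_nonneg wf_level_nonneg gp beta) auto
    ultimately show ?thesis using F by (simp add: G_def wp_tw_def)
  qed
  have ptw: "(1 / real B) * (\<Sum>b<B. p_tw_lt CX B R \<beta> s \<gamma> b) = (if W \<gamma> \<le> s then W \<gamma> else 0)" for s \<gamma>
    by (cases "W \<gamma> \<le> s") (simp_all add: p_tw_lt_def W_def)
  define f where "f s = avg_power CX m B R \<beta> s" for s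
  have f_eq: "f s = (\<integral>\<^sup>+\<gamma>. ennreal (if W \<gamma> \<le> s then W \<gamma> else 0) \<partial>fading m B)" for s
    unfolding f_def avg_power_def by (subst ptw) (rule refl)
  have fmono: "f s \<le> f t" if st: "s \<le> t" for s t
    unfolding f_eq
  proof (rule nn_integral_mono_AE)
    show "AE \<gamma> in fading m B. ennreal (if W \<gamma> \<le> s then W \<gamma> else 0) \<le> ennreal (if W \<gamma> \<le> t then W \<gamma> else 0)"
      using ff(2)
    proof eventually_elim
      case (elim \<gamma>)
      then show ?case using key[OF elim] st by (auto intro: ennreal_leI)
    qed
  qed
  have fbound: "f s \<le> (\<integral>\<^sup>+\<gamma>. ennreal (G \<gamma>) \<partial>fading m B)" for s
    unfolding f_eq
  proof (rule nn_integral_mono_AE)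
    show "AE \<gamma> in fading m B. ennreal (if W \<gamma> \<le> s then W \<gamma> else 0) \<le> ennreal (G \<gamma>)"
      using ff(2)
    proof eventually_elim
      case (elim \<gamma>)
      then show ?case using key[OF elim] Gnn[of \<gamma>] by (auto intro: ennreal_leI)
    qed
  qed
  define L where "L = (SUP s. f s)"
  have L_fin: "L < \<infinity>"
  proof -
    have "L \<le> (\<integral>\<^sup>+\<gamma>. ennreal (G \<gamma>) \<partial>fading m B)" unfolding L_def by (rule SUP_least) (rule fbound)
    then show ?thesis using Gfin by (simp add: le_less_trans)
  qed
  have f_lim: "(f \<longlongrightarrow> L) at_top"
  proof (rule order_tendstoI)
    fix a assume "a < L"
    then obtain s0 where s0: "a < f s0" unfolding L_def by (auto simp: less_SUP_iff)
    have "\<forall>s\<ge>s0. a < f s" using fmono s0 by (auto intro: less_le_trans)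
    then show "eventually (\<lambda>s. a < f s) at_top" by (auto simp: eventually_at_top_linorder)
  next
    fix a assume "L < a"
    have "f s \<le> L" for s unfolding L_def by (rule SUP_upper) auto
    then have "\<forall>s. f s < a" using \<open>L < a\<close> by (auto intro: le_less_trans)
    then show "eventually (\<lambda>s. f s < a) at_top" by simp
  qed
  have partA: "\<exists>L. L < \<infinity> \<and> ((\<lambda>s. avg_power CX m B R \<beta> s) \<longlongrightarrow> L) at_top"
    using L_fin f_lim unfolding f_def[abs_def] by blast
  have Gint: "integrable (fading m B) G"
    using Gmeas Gfin Gnn by (intro integrableI_nonneg) auto
  define EG where "EG = (\<integral>\<gamma>. G \<gamma> \<partial>fading m B)"
  from ff(2) obtain N0 where N0: "{\<gamma> \<in> space (fading m B). \<not> (\<forall>b\<in>{..<B}. 0 < \<gamma> b)} \<subseteq> N0"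
    "emeasure (fading m B) N0 = 0" "N0 \<in> sets (fading m B)"
    by (rule AE_E)
  have N0null: "N0 \<in> null_sets (fading m B)" using N0 by auto
  have out_le: "outage_prob CX m B R \<beta> s \<le> EG / s" if s: "0 < s" for s
  proof -
    define Ot where "Ot = {\<gamma> \<in> space (fading m B).
        (1 / real B) * (\<Sum>b<B. mi_awgn CX (p_tw_lt CX B R \<beta> s \<gamma> b * \<gamma> b)) < R}"
    define A where "A = {\<gamma> \<in> space (fading m B). s \<le> G \<gamma>}"
    have Asets: "A \<in> sets (fading m B)" unfolding A_def using Gmeas by measurable
    have OA: "Ot \<subseteq> A \<union> N0"
    proof
      fix \<gamma> assume g: "\<gamma> \<in> Ot"
      show "\<gamma> \<in> A \<union> N0"
      proof (cases "\<forall>b\<in>{..<B}. 0 < \<gamma> b")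
        case False then show ?thesis using g N0(1) by (auto simp: Ot_def)
      next
        case True
        show ?thesis
        proof (rule ccontr)
          assume "\<gamma> \<notin> A \<union> N0"
          then have "G \<gamma> < s" using g by (auto simp: A_def Ot_def)
          then have Ws: "W \<gamma> \<le> s" using key[OF True] by linarith
          then have "\<And>b. p_tw_lt CX B R \<beta> s \<gamma> b = wp_tw CX B R \<beta> \<gamma> b"
            by (simp add: p_tw_lt_def W_def)
          then have "(1 / real B) * (\<Sum>b<B. mi_awgn CX (p_tw_lt CX B R \<beta> s \<gamma> b * \<gamma> b)) = R"
            using key[OF True] by simp
          then show False using g by (simp add: Ot_def)
        qed
      qed
    qed
    have "measure (fading m B) Ot \<le> measure (fading m B) A"
    proof (cases "Ot \<in> sets (fading m B)")
      case True
      have "measure (fading m B) Ot \<le> measure (fading m B) (A \<union> N0)"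
        using OA Asets N0(3) by (intro P.finite_measure_mono) auto
      also have "\<dots> = measure (fading m B) A" using Asets N0null by (rule measure_Un_null_set)
      finally show ?thesis .
    next
      case False then show ?thesis by (simp add: measure_notin_sets)
    qed
    also have "measure (fading m B) A \<le> EG / s"
      unfolding A_def EG_def
      by (rule integral_Markov_inequality_measure[OF Gint _ _ s]) (auto simp: Gnn)
    finally show ?thesis by (simp add: outage_prob_def Ot_def)
  qed
  have partB: "((\<lambda>s. outage_prob CX m B R \<beta> s) \<longlongrightarrow> 0) at_top"
  proof (rule tendsto_sandwich[where f="\<lambda>_. 0" and h="\<lambda>s. EG / s"])
    show "eventually (\<lambda>s. 0 \<le> outage_prob CX m B R \<beta> s) at_top"
      by (simp add: outage_prob_def)
    show "eventually (\<lambda>s. outage_prob CX m B R \<beta> s \<le> EG / s) at_top"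
    proof -
      have "\<forall>s\<ge>1. outage_prob CX m B R \<beta> s \<le> EG / s" using out_le by auto
      then show ?thesis by (auto simp: eventually_at_top_linorder)
    qed
    show "((\<lambda>_. 0) \<longlongrightarrow> (0::real)) at_top" by simp
    show "((\<lambda>s. EG / s) \<longlongrightarrow> 0) at_top"
      by (rule tendsto_divide_0[OF tendsto_const filterlim_at_top_imp_at_infinity[OF filterlim_ident]])
  qed
  show ?thesis using partA partB by blast
qed

end
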